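(* Let $k\ge 3$, $k'=k-1$, and $A\in\mathcal{M}_d$. Let $\pi\in S_{2k'}$ be the cycle $\pi=(2k'\!-\!1\;\;2k'\!-\!2\;\cdots\;k'\!+\!1\;\;k')$. Then $$\operatorname{tr}_1\big[(1\,2\cdots k)^{T_k}(A\otimes\mathbb{1}^{\otimes(k-1)})\big]=\tau^{-1}\pi\,\tau\big(A\otimes\mathbb{1}^{\otimes(k-2)}\big).$$
   Context: $\mathcal{M}_d$ denotes complex $d\times d$ matrices; $\{|i\rangle\}$ is a fixed orthonormal basis of $\mathbb{C}^d$. A permutation $\sigma\in S_n$ acts on $(\mathbb{C}^d)^{\otimes n}$ by $\sigma|v_1\rangle\otimes\cdots\otimes|v_n\rangle=|v_{\sigma^{-1}(1)}\rangle\otimes\cdots\otimes|v_{\sigma^{-1}(n)}\rangle$; cycle notation $(a_1\,a_2\cdots a_r)$ means $a_1\to a_2\to\cdots\to a_r\to a_1$. $T_k$ is the partial transpose on the $k$-th factor in the basis $\{|i\rangle\}$; $\operatorname{tr}_1$ is the partial trace over the first factor. $\tau$ is the linear map from operators on $(\mathbb{C}^d)^{\otimes k'}$ to vectors in $(\mathbb{C}^d)^{\otimes 2k'}$ defined by $\tau(|i_1\dots i_{k'}\rangle\langle j_1\dots j_{k'}|)=|i_1\dots i_{k'}\rangle|j_1\dots j_{k'}\rangle$, and $\tau^{-1}$ is its inverse; thus $\tau^{-1}\pi\tau$ applies $\pi$ (acting on $(\mathbb{C}^d)^{\otimes 2k'}$) to the combined list of ket and bra indices. *)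

theory Defs
  imports "HOL-Combinatorics.Cycles" "Jordan_Normal_Form.Matrix"
begin

text \<open>An operator on (C^d)^{\<otimes>n} is given by its matrix elements X a b = <a|X|b>;
  a vector by its coefficients v c = <c|v>. Tensor positions are 1-based in the
  paper; position m corresponds to list index m-1.\<close>

type_synonym idx = "nat list"
type_synonym op = "idx \<Rightarrow> idx \<Rightarrow> complex"
type_synonym vec = "idx \<Rightarrow> complex"

definition idxs :: "nat \<Rightarrow> nat \<Rightarrow> idx set" where
  "idxs d n = {xs. length xs = n \<and> set xs \<subseteq> {..<d}}"

definition op_eq :: "nat \<Rightarrow> nat \<Rightarrow> op \<Rightarrow> op \<Rightarrow> bool" where
  "op_eq d n X Y \<longleftrightarrow> (\<forall>a\<in>idxs d n. \<forall>b\<in>idxs d n. X a b = Y a b)"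

definition op_mult :: "nat \<Rightarrow> nat \<Rightarrow> op \<Rightarrow> op \<Rightarrow> op" where
  "op_mult d n X Y = (\<lambda>a b. \<Sum>c\<in>idxs d n. X a c * Y c b)"

definition mat_op :: "complex mat \<Rightarrow> op" where
  "mat_op A = (\<lambda>a b. A $$ (a ! 0, b ! 0))"

definition id_op :: op where
  "id_op = (\<lambda>a b. if a = b then 1 else 0)"

definition tensor_op :: "nat \<Rightarrow> op \<Rightarrow> op \<Rightarrow> op" where
  "tensor_op n X Y = (\<lambda>a b. X (take n a) (take n b) * Y (drop n a) (drop n b))"

text \<open>Permutation action on basis tuples:
  sigma |i_1..i_n> = |i_{sigma^-1(1)} .. i_{sigma^-1(n)}>.\<close>
definition perm_idx :: "nat \<Rightarrow> (nat \<Rightarrow> nat) \<Rightarrow> idx \<Rightarrow> idx" where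
  "perm_idx n sg b = map (\<lambda>m. b ! (inv_into UNIV sg (m + 1) - 1)) [0..<n]"

definition perm_op :: "nat \<Rightarrow> (nat \<Rightarrow> nat) \<Rightarrow> op" where
  "perm_op n sg = (\<lambda>a b. if a = perm_idx n sg b then 1 else 0)"

definition perm_vec :: "nat \<Rightarrow> nat \<Rightarrow> (nat \<Rightarrow> nat) \<Rightarrow> vec \<Rightarrow> vec" where
  "perm_vec d n sg v = (\<lambda>c. \<Sum>b\<in>idxs d n. if c = perm_idx n sg b then v b else 0)"

definition ptrans :: "nat \<Rightarrow> op \<Rightarrow> op" where
  "ptrans p X = (\<lambda>a b. X (a[p - 1 := b ! (p - 1)]) (b[p - 1 := a ! (p - 1)]))"

definition ptr1 :: "nat \<Rightarrow> op \<Rightarrow> op" where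
  "ptr1 d X = (\<lambda>a b. \<Sum>i<d. X (i # a) (i # b))"

text \<open>tau: |i><j| \<mapsto> |i>|j> for operators on k' factors, and its inverse.\<close>
definition tau :: "nat \<Rightarrow> op \<Rightarrow> vec" where
  "tau n X = (\<lambda>c. X (take n c) (drop n c))"

definition tau_inv :: "vec \<Rightarrow> op" where
  "tau_inv v = (\<lambda>a b. v (a @ b))"

end

theory Submission
  imports Defs
begin


lemma cyc_nth:
  assumes "distinct cs" "i < length cs"
  shows "cycle_of_list cs (cs!i) = cs!(Suc i mod length cs)"
proof -
  have "map (cycle_of_list cs ^^ 1) cs = rotate 1 cs" using cyclic_rotation[OF assms(1)] .
  hence "map (cycle_of_list cs) cs ! i = rotate1 cs ! i" by simp
  thus ?thesis using assms(2) by (simp add: nth_rotate1)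
qed

lemma sigma_val1:
  assumes "1 \<le> j" "j < k" shows "cycle_of_list [1..<k+1] j = j+1"
proof -
  have "cycle_of_list [1..<k+1] ([1..<k+1]!(j-1)) = [1..<k+1]!(Suc (j-1) mod k)"
    using cyc_nth[of "[1..<k+1]" "j-1"] assms by (simp del: upt_Suc)
  moreover have "[1..<k+1]!(j-1) = j" "[1..<k+1]!j = j+1" using assms by (simp_all del: upt_Suc)
  moreover have "Suc (j-1) mod k = j" using assms by simp
  ultimately show ?thesis by simp
qed

lemma sigma_val2:
  assumes "1 \<le> k" shows "cycle_of_list [1..<k+1] k = 1"
proof -
  have "cycle_of_list [1..<k+1] ([1..<k+1]!(k-1)) = [1..<k+1]!(Suc (k-1) mod k)"
    using cyc_nth[of "[1..<k+1]" "k-1"] assms by (simp del: upt_Suc)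
  moreover have "[1..<k+1]!(k-1) = k" "[1..<k+1]!0 = 1" using assms by (simp_all del: upt_Suc)
  moreover have "Suc (k-1) mod k = 0" using assms by simp
  ultimately show ?thesis by simp
qed

lemma pi_val1:
  assumes "n < j" "j < 2*n" shows "cycle_of_list (rev [n..<2*n]) j = j - 1"
proof -
  let ?cs = "rev [n..<2*n]"
  have nth: "?cs ! i = 2*n - 1 - i" if "i < n" for i
    using that by (simp add: rev_nth)
  have "cycle_of_list ?cs (?cs!(2*n-1-j)) = ?cs!(Suc (2*n-1-j) mod n)"
    using cyc_nth[of ?cs "2*n-1-j"] assms by simp
  moreover have "?cs!(2*n-1-j) = j" using nth[of "2*n-1-j"] assms by simp
  moreover have "Suc (2*n-1-j) mod n = Suc (2*n-1-j)" using assms by simp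
  moreover have "?cs!(Suc (2*n-1-j)) = j - 1" using nth[of "Suc (2*n-1-j)"] assms by simp
  ultimately show ?thesis by simp
qed

lemma pi_val2:
  assumes "1 \<le> n" shows "cycle_of_list (rev [n..<2*n]) n = 2*n - 1"
proof -
  let ?cs = "rev [n..<2*n]"
  have nth: "?cs ! i = 2*n - 1 - i" if "i < n" for i
    using that by (simp add: rev_nth)
  have "cycle_of_list ?cs (?cs!(n-1)) = ?cs!(Suc (n-1) mod n)"
    using cyc_nth[of ?cs "n-1"] assms by simp
  moreover have "?cs!(n-1) = n" using nth[of "n-1"] assms by simp
  moreover have "?cs!0 = 2*n-1" using nth[of 0] assms by simp
  ultimately show ?thesis using assms by simp
qed

lemma pi_val3:
  assumes "j < n \<or> 2*n \<le> j" shows "cycle_of_list (rev [n..<2*n]) j = j"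
  using assms by (intro id_outside_supp) auto


lemma perm_idx_eq_iff:
  assumes sg: "sg permutes {1..N}" and lc: "length c = N" and lb: "length bb = N"
  shows "(c = perm_idx N sg bb) \<longleftrightarrow> (\<forall>j<N. bb!j = c!(sg(j+1)-1))"
proof -
  have "(c = perm_idx N sg bb) \<longleftrightarrow> (\<forall>m<N. c!m = bb!(inv_into UNIV sg (m+1) - 1))"
    unfolding perm_idx_def using lc by (simp add: list_eq_iff_nth_eq)
  also have "\<dots> \<longleftrightarrow> (\<forall>j<N. bb!j = c!(sg(j+1)-1))"
  proof
    assume H: "\<forall>m<N. c!m = bb!(inv_into UNIV sg (m+1) - 1)"
    show "\<forall>j<N. bb!j = c!(sg(j+1)-1)"
    proof (intro allI impI)
      fix j assume j: "j < N"
      have "sg (j+1) \<in> {1..N}" using permutes_in_image[OF sg] j by simp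
      hence "sg(j+1) - 1 < N" "sg(j+1) - 1 + 1 = sg (j+1)" by auto
      hence "c!(sg(j+1)-1) = bb!(inv_into UNIV sg (sg (j+1)) - 1)" using H by metis
      thus "bb!j = c!(sg(j+1)-1)" using permutes_inverses(2)[OF sg, of "j+1"] by simp
    qed
  next
    assume H: "\<forall>j<N. bb!j = c!(sg(j+1)-1)"
    show "\<forall>m<N. c!m = bb!(inv_into UNIV sg (m+1) - 1)"
    proof (intro allI impI)
      fix m assume m: "m < N"
      have "inv_into UNIV sg (m+1) \<in> {1..N}" using permutes_in_image[OF permutes_inv[OF sg]] m by simp
      hence "inv_into UNIV sg (m+1) - 1 < N" "inv_into UNIV sg (m+1) - 1 + 1 = inv_into UNIV sg (m+1)" by auto
      hence "bb!(inv_into UNIV sg (m+1) - 1) = c!(sg(inv_into UNIV sg (m+1))-1)" using H by metis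
      thus "c!m = bb!(inv_into UNIV sg (m+1) - 1)" using permutes_inverses(1)[OF sg, of "m+1"] by simp
    qed
  qed
  finally show ?thesis .
qed

lemma finite_idxs: "finite (idxs d n)"
  unfolding idxs_def using finite_lists_length_eq[of "{..<d}" n] by (simp add: conj_commute)

lemma idxs_Suc: "sum g (idxs d (Suc n)) = (\<Sum>x<d. \<Sum>ys\<in>idxs d n. g (x#ys))"
proof -
  have eq: "idxs d (Suc n) = (\<lambda>(x,ys). x#ys) ` ({..<d} \<times> idxs d n)"
    unfolding idxs_def by (auto simp: length_Suc_conv image_iff)
  have inj: "inj_on (\<lambda>(x,ys). x#ys) ({..<d} \<times> idxs d n)" by (auto simp: inj_on_def)
  show ?thesis unfolding eq sum.reindex[OF inj] sum.cartesian_product by (simp add: case_prod_beta)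
qed



abbreviation "CC n a b \<equiv> (\<forall>j<n-2. a!(j+1) = b!j) \<and> b!(n-1) = b!(n-2)"

lemma PT_val:
  assumes n: "2 \<le> n" and la: "length a = n" and lb: "length b = n"
  shows "ptrans (Suc n) (perm_op (Suc n) (cycle_of_list [1..<Suc n+1])) (i#a) (x#b)
     = (if i = a!(n-1) \<and> x = a!0 \<and> CC n a b then 1 else 0)"
proof -
  define sg where "sg = cycle_of_list [1..<Suc n+1]"
  define u where "u = (i#a)[n := (x#b)!n]"
  define v where "v = (x#b)[n := (i#a)!n]"
  have lhs: "ptrans (Suc n) (perm_op (Suc n) sg) (i#a) (x#b) = (if u = perm_idx (Suc n) sg v then 1 else 0)"
    unfolding ptrans_def perm_op_def u_def v_def by simp
  have "sg permutes set [1..<Suc n+1]" unfolding sg_def by (rule cycle_permutes)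
  moreover have "set [1..<Suc n+1] = {1..Suc n}" by auto
  ultimately have sgp: "sg permutes {1..Suc n}" by simp
  have lu: "length u = Suc n" and lv: "length v = Suc n" unfolding u_def v_def using la lb by (simp_all del: list_update.simps)
  have eq: "(u = perm_idx (Suc n) sg v) \<longleftrightarrow> (\<forall>j<Suc n. v!j = u!(sg(j+1)-1))"
    using perm_idx_eq_iff[OF sgp lu lv] .
  have sv: "sg(j+1) - 1 = (if j < n then j+1 else 0)" if "j < Suc n" for j
  proof (cases "j < n")
    case True thus ?thesis unfolding sg_def using sigma_val1[of "j+1" "Suc n"] by (simp del: upt_Suc)
  next
    case False hence "j = n" using that by simp
    thus ?thesis unfolding sg_def using sigma_val2[of "Suc n"] by (simp del: upt_Suc)
  qed
  obtain m where m: "n = Suc m" using n by (cases n) auto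
  have uu: "u = i # a[n-1 := b!(n-1)]" unfolding u_def m by simp
  have vv: "v = x # b[n-1 := a!(n-1)]" unfolding v_def m by simp
  have u0: "u!0 = i" and un: "u!n = b!(n-1)" unfolding uu using la lb n m
    by (auto simp: nth_list_update)
  have u1: "u!j = a!(j-1)" if "1 \<le> j" "j < n" for j unfolding uu using la lb n that
    by (auto simp: nth_Cons' nth_list_update)
  have v0: "v!0 = x" and vn: "v!n = a!(n-1)" unfolding vv using la lb n m
    by (auto simp: nth_list_update)
  have v1: "v!j = b!(j-1)" if "1 \<le> j" "j < n" for j unfolding vv using la lb n that
    by (auto simp: nth_Cons' nth_list_update)
  have "(\<forall>j<Suc n. v!j = u!(sg(j+1)-1)) \<longleftrightarrow> (\<forall>j<Suc n. v!j = u!(if j < n then j+1 else 0))"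
    using sv by auto
  also have "\<dots> \<longleftrightarrow> (i = a!(n-1) \<and> x = a!0 \<and> CC n a b)"
  proof
    assume H: "\<forall>j<Suc n. v!j = u!(if j < n then j+1 else 0)"
    have "v!n = u!0" using H[rule_format, of n] by simp
    hence 1: "i = a!(n-1)" using u0 vn by simp
    have "v!0 = u!1" using H[rule_format, of 0] n by simp
    hence 2: "x = a!0" using v0 u1[of 1] n by simp
    have "v!(n-1) = u!n" using H[rule_format, of "n-1"] n by simp
    hence 3: "b!(n-1) = b!(n-2)" using v1[of "n-1"] un n by (simp add: numeral_2_eq_2)
    have 4: "a!(j+1) = b!j" if "j < n-2" for j
    proof -
      have "j+1 < n" using that by simp
      hence "v!(j+1) = u!(j+2)" using H[rule_format, of "j+1"] by simp
      thus ?thesis using v1[of "j+1"] u1[of "j+2"] that by simp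
    qed
    show "i = a!(n-1) \<and> x = a!0 \<and> CC n a b" using 1 2 3 4 by auto
  next
    assume H: "i = a!(n-1) \<and> x = a!0 \<and> CC n a b"
    show "\<forall>j<Suc n. v!j = u!(if j < n then j+1 else 0)"
    proof (intro allI impI)
      fix j assume j: "j < Suc n"
      consider "j = 0" | "1 \<le> j" "j < n-1" | "j = n-1" | "j = n" using j n by linarith
      thus "v!j = u!(if j < n then j+1 else 0)"
      proof cases
        case 1 thus ?thesis using H v0 u1[of 1] n by simp
      next
        case 2
        have "j-1 < n-2" using 2 by simp
        hence "a!(j-1+1) = b!(j-1)" using H by blast
        moreover have "j < n" "j+1 < n" using 2 by auto
        ultimately show ?thesis using 2 v1[of j] u1[of "j+1"] by simp
      next
        case 3 thus ?thesis using H v1[of "n-1"] un n by (simp add: numeral_2_eq_2)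
      next
        case 4 thus ?thesis using H vn u0 n by simp
      qed
    qed
  qed
  finally show ?thesis using lhs eq unfolding sg_def by simp
qed



lemma idxs_len: "xs \<in> idxs d n \<Longrightarrow> length xs = n" by (simp add: idxs_def)
lemma idxs_nth: "xs \<in> idxs d n \<Longrightarrow> j < n \<Longrightarrow> xs!j < d"
  unfolding idxs_def by (auto dest!: nth_mem)

lemma mult_if01: "x * (if P then 1 else 0) = (if P then x else (0::complex))" by simp

lemma sum2:
  fixes p q d :: nat
  assumes "p < d" "q < d"
  shows "(\<Sum>i<d. \<Sum>x<d. if i = p then (if x = q then f x i else 0) else 0) = (f q p :: complex)"
proof -
  have "(\<Sum>i<d. \<Sum>x<d. if i = p then (if x = q then f x i else 0) else 0)
      = (\<Sum>i<d. if i = p then (\<Sum>x<d. if x = q then f x i else 0) else 0)"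
    by (intro sum.cong refl) auto
  also have "\<dots> = (\<Sum>x<d. if x = q then f x p else 0)" using assms by (simp only: sum.delta[OF finite_lessThan]) simp
  also have "\<dots> = f q p" using assms by simp
  finally show ?thesis .
qed

lemma LHS_val:
  assumes n: "2 \<le> n" and a: "a \<in> idxs d n" and b: "b \<in> idxs d n"
  shows "ptr1 d (op_mult d (Suc n) (ptrans (Suc n) (perm_op (Suc n) (cycle_of_list [1..<Suc n+1])))
           (tensor_op 1 (mat_op A) id_op)) a b = (if CC n a b then A$$(a!0, a!(n-1)) else 0)"
proof -
  let ?PT = "ptrans (Suc n) (perm_op (Suc n) (cycle_of_list [1..<Suc n+1]))"
  let ?T = "tensor_op 1 (mat_op A) id_op"
  define R where "R = (\<lambda>x i. if CC n a b then A$$(x,i) else 0)"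
  have T: "?T (x#ys) (i#b) = A$$(x,i) * (if ys = b then 1 else 0)" for x ys i
    by (simp add: tensor_op_def mat_op_def id_op_def)
  have inner: "(\<Sum>ys\<in>idxs d n. ?PT (i#a) (x#ys) * ?T (x#ys) (i#b)) = ?PT (i#a) (x#b) * A$$(x,i)" for i x
  proof -
    have "(\<Sum>ys\<in>idxs d n. ?PT (i#a) (x#ys) * ?T (x#ys) (i#b))
        = (\<Sum>ys\<in>idxs d n. if ys = b then ?PT (i#a) (x#b) * A$$(x,i) else 0)"
      unfolding T by (rule sum.cong) auto
    also have "\<dots> = ?PT (i#a) (x#b) * A$$(x,i)" using b finite_idxs by simp
    finally show ?thesis .
  qed
  have "ptr1 d (op_mult d (Suc n) ?PT ?T) a b
      = (\<Sum>i<d. \<Sum>x<d. \<Sum>ys\<in>idxs d n. ?PT (i#a) (x#ys) * ?T (x#ys) (i#b))"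
    unfolding ptr1_def op_mult_def idxs_Suc by simp
  also have "\<dots> = (\<Sum>i<d. \<Sum>x<d. ?PT (i#a) (x#b) * A$$(x,i))" using inner by simp
  also have "\<dots> = (\<Sum>i<d. \<Sum>x<d. if i = a!(n-1) then (if x = a!0 then R x i else 0) else 0)"
    unfolding R_def using PT_val[OF n idxs_len[OF a] idxs_len[OF b]] by (intro sum.cong refl) auto
  also have "\<dots> = R (a!0) (a!(n-1))"
    using idxs_nth[OF a, of 0] idxs_nth[OF a, of "n-1"] n by (intro sum2) auto
  also have "\<dots> = (if CC n a b then A$$(a!0, a!(n-1)) else 0)" unfolding R_def ..
  finally show ?thesis .
qed

lemma RHS_val:
  assumes n: "2 \<le> n" and a: "a \<in> idxs d n" and b: "b \<in> idxs d n"
  shows "tau_inv (perm_vec d (2*n) (cycle_of_list (rev [n..<2*n])) (tau n (tensor_op 1 (mat_op A) id_op))) a b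
     = (if CC n a b then A$$(a!0, a!(n-1)) else 0)"
proof -
  define p where "p = cycle_of_list (rev [n..<2*n])"
  let ?T = "tensor_op 1 (mat_op A) id_op"
  define c where "c = a @ b"
  have lc: "length c = 2*n" unfolding c_def using idxs_len[OF a] idxs_len[OF b] by simp
  have setc: "set c \<subseteq> {..<d}" unfolding c_def using a b by (auto simp: idxs_def)
  have "p permutes set (rev [n..<2*n])" unfolding p_def by (rule cycle_permutes)
  moreover have "set (rev [n..<2*n]) \<subseteq> {1..2*n}" using n by auto
  ultimately have pp: "p permutes {1..2*n}" by (rule permutes_subset)
  define w where "w = map (\<lambda>j. c!(p(j+1)-1)) [0..<2*n]"
  have lw: "length w = 2*n" unfolding w_def by simp
  have pr: "p(j+1) - 1 < 2*n" if "j < 2*n" for j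
  proof -
    have "p (j+1) \<in> {1..2*n}" using permutes_in_image[OF pp] that by simp
    thus ?thesis by auto
  qed
  have wj: "w!j = c!(p(j+1)-1)" if "j < 2*n" for j unfolding w_def using that by simp
  have w_idx: "w \<in> idxs d (2*n)"
  proof -
    have "set w \<subseteq> {..<d}"
    proof
      fix y assume "y \<in> set w"
      then obtain j where j: "j < 2*n" "y = w!j" using lw by (auto simp: in_set_conv_nth)
      hence "y = c!(p(j+1)-1)" using wj by simp
      moreover have "c!(p(j+1)-1) \<in> set c" using pr[OF j(1)] lc by (intro nth_mem) simp
      ultimately show "y \<in> {..<d}" using setc by auto
    qed
    thus ?thesis using lw by (simp add: idxs_def)
  qed
  have iff: "(c = perm_idx (2*n) p bb) \<longleftrightarrow> bb = w" if "bb \<in> idxs d (2*n)" for bb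
  proof -
    have lb: "length bb = 2*n" using idxs_len[OF that] .
    show ?thesis unfolding perm_idx_eq_iff[OF pp lc lb] using lb lw wj
      by (auto simp: list_eq_iff_nth_eq)
  qed
  have "tau_inv (perm_vec d (2*n) p (tau n ?T)) a b
      = (\<Sum>bb\<in>idxs d (2*n). if bb = w then tau n ?T w else 0)"
    unfolding tau_inv_def perm_vec_def c_def[symmetric] using iff by (intro sum.cong refl) auto
  also have "\<dots> = tau n ?T w" using w_idx finite_idxs by simp
  also have "\<dots> = A$$(w!0, w!n) * (if drop 1 (take n w) = drop 1 (drop n w) then 1 else 0)"
    unfolding tau_def tensor_op_def mat_op_def id_op_def using n lw by simp
  finally have main: "tau_inv (perm_vec d (2*n) p (tau n ?T)) a b =
     A$$(w!0, w!n) * (if drop 1 (take n w) = drop 1 (drop n w) then 1 else 0)" .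
  have la: "length a = n" and lb: "length b = n" using idxs_len a b by auto
  have w_lo: "w!j = a!j" if "j+1 < n" for j
  proof -
    have "p (j+1) = j+1" unfolding p_def using that by (intro pi_val3) simp
    thus ?thesis using wj[of j] that la by (simp add: c_def nth_append)
  qed
  have w_mid: "w!(n-1) = b!(n-2)"
  proof -
    have "p (n-1+1) = 2*n-1" unfolding p_def using pi_val2[of n] n by simp
    hence "w!(n-1) = c!(2*n-1-1)" using wj[of "n-1"] n by simp
    hence "w!(n-1) = c!(2*n-2)" by (simp add: numeral_2_eq_2)
    moreover have "\<not> 2*n-2 < n" using n by simp
    hence "c!(2*n-2) = b!(2*n-2-n)" unfolding c_def using la by (simp add: nth_append)
    moreover have "2*n-2-n = n-2" by simp
    ultimately show ?thesis by simp
  qed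
  have w_n: "w!n = a!(n-1)"
  proof -
    have "p (n+1) = n" unfolding p_def using pi_val1[of n "n+1"] n by simp
    thus ?thesis using wj[of n] n la by (simp add: c_def nth_append)
  qed
  have w_hi: "w!j = b!(j-1-n)" if "n < j" "j < 2*n-1" for j
  proof -
    have "p (j+1) = j" unfolding p_def using pi_val1[of n "j+1"] that by simp
    hence "w!j = c!(j-1)" using wj[of j] that by simp
    moreover have "\<not> j-1 < n" using that by simp
    ultimately show ?thesis using la by (simp add: c_def nth_append)
  qed
  have w_top: "w!(2*n-1) = b!(n-1)"
  proof -
    have "p (2*n-1+1) = 2*n-1+1" unfolding p_def using n by (intro pi_val3) simp
    hence "w!(2*n-1) = c!(2*n-1)" using wj[of "2*n-1"] n by simp
    moreover have "\<not> 2*n-1 < n" "2*n-1-n = n-1" using n by auto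
    ultimately show ?thesis using la by (simp add: c_def nth_append)
  qed
  have w0: "w!0 = a!0" using w_lo[of 0] n by simp
  have "(drop 1 (take n w) = drop 1 (drop n w)) \<longleftrightarrow> (\<forall>j<n-1. w!(Suc j) = w!(n + Suc j))"
    using lw n by (auto simp: list_eq_iff_nth_eq)
  also have "\<dots> \<longleftrightarrow> CC n a b"
  proof
    assume H: "\<forall>j<n-1. w!(Suc j) = w!(n + Suc j)"
    have 1: "a!(j+1) = b!j" if "j < n-2" for j
      using H[rule_format, of j] that w_lo[of "Suc j"] w_hi[of "n + Suc j"] by simp
    have e: "n-2 < n-1" "Suc (n-2) = n-1" "n + Suc (n-2) = 2*n-1" using n by auto
    have "w!(Suc (n-2)) = w!(n + Suc (n-2))" using H e(1) by blast
    hence "w!(n-1) = w!(n + (n-1))" by (simp only: e(2))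
    moreover have "n + (n-1) = 2*n-1" using n by simp
    ultimately have "w!(n-1) = w!(2*n-1)" by simp
    hence "b!(n-1) = b!(n-2)" using w_mid w_top by simp
    thus "CC n a b" using 1 by auto
  next
    assume H: "CC n a b"
    show "\<forall>j<n-1. w!(Suc j) = w!(n + Suc j)"
    proof (intro allI impI)
      fix j assume j: "j < n-1"
      show "w!(Suc j) = w!(n + Suc j)"
      proof (cases "j < n-2")
        case True thus ?thesis using H w_lo[of "Suc j"] w_hi[of "n + Suc j"] by simp
      next
        case False hence "j = n-2" using j by simp
        hence "Suc j = n-1" "n + Suc j = 2*n-1" using n by auto
        thus ?thesis using w_mid w_top H by simp
      qed
    qed
  qed
  finally have "(drop 1 (take n w) = drop 1 (drop n w)) \<longleftrightarrow> CC n a b" .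
  hence "tau_inv (perm_vec d (2*n) p (tau n ?T)) a b = A$$(a!0, a!(n-1)) * (if CC n a b then 1 else 0)"
    using main w0 w_n by (simp only:)
  thus ?thesis unfolding p_def[symmetric] by (simp only: mult_if01)
qed


theorem proposition6:
  fixes d k :: nat and A :: "complex mat"
  assumes "A \<in> carrier_mat d d" and "k \<ge> 3"
  defines "k' \<equiv> k - 1"
  defines "\<pi> \<equiv> cycle_of_list (rev [k'..<2 * k'])"
  shows "op_eq d k'
     (ptr1 d (op_mult d k (ptrans k (perm_op k (cycle_of_list [1..<k + 1])))
                          (tensor_op 1 (mat_op A) id_op)))
     (tau_inv (perm_vec d (2 * k') \<pi> (tau k' (tensor_op 1 (mat_op A) id_op))))"
proof -
  have k: "k = Suc k'" using assms(2) unfolding k'_def by simp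
  have n2: "2 \<le> k'" using assms(2) unfolding k'_def by simp
  show ?thesis unfolding op_eq_def \<pi>_def
  proof (intro ballI)
    fix a b assume a: "a \<in> idxs d k'" and b: "b \<in> idxs d k'"
    show "ptr1 d (op_mult d k (ptrans k (perm_op k (cycle_of_list [1..<k + 1])))
                          (tensor_op 1 (mat_op A) id_op)) a b =
      tau_inv (perm_vec d (2 * k') (cycle_of_list (rev [k'..<2 * k'])) (tau k' (tensor_op 1 (mat_op A) id_op))) a b"
      unfolding k using LHS_val[OF n2 a b, of A] RHS_val[OF n2 a b, of A] by simp
  qed
qed

end
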